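(* For $t\in(0,1)$ and $n\ge1$ the recurrence coefficients satisfy $$(2n+2+\alpha+\beta)\alpha_n=2tr_n-2y_n-\beta+(2n+1+\alpha+\beta)t+(1-t)x_n=2\mathsf p_1(n,t)-\beta+(2n+1+\alpha+\beta)t+(1-t)x_n,$$ and $$\begin{aligned}(2n-1+\alpha+\beta)(2n+1+\alpha+\beta)\beta_n&=(y_n-tr_n)^2+(2n+\alpha)tr_n+[\beta-(2n+\alpha+\beta)t]y_n+n(n+\alpha)t\\&=\mathsf p_1(n,t)^2+(2n+\alpha)\mathsf p_1(n,t)+(2n+\alpha+\beta)(1-t)y_n+n(n+\alpha)t\\&=\mathsf p_1(n,t)^2+[-\beta+(2n+\alpha+\beta)t]\mathsf p_1(n,t)+(2n+\alpha+\beta)t(1-t)\mathsf p_1'(n,t)+n(n+\alpha)t.\end{aligned}$$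
   Context: Fix $\alpha>0$, $\beta>0$, and real $A,B$ with $A\ge0$, $A+B\ge0$, not both zero; $\theta$ is the Heaviside step function. For $t\in(0,1)$ let $w(x;t)=x^\alpha(1-x)^\beta(A+B\theta(x-t))$ on $[0,1]$, and let $P_n(x)=P_n(x;t)=x^n+\mathsf p_1(n,t)x^{n-1}+\cdots$ be the monic orthogonal polynomials: $\int_0^1P_iP_jw\,dx=h_i(t)\delta_{ij}$, $h_i>0$, satisfying $xP_n=P_{n+1}+\alpha_nP_n+\beta_nP_{n-1}$, $P_{-1}=0$, $\beta_n=h_n/h_{n-1}$, $\mathsf p_1(0,t)=0$. Define $R_n(t)=B\,t^\alpha(1-t)^\beta P_n(t;t)^2/h_n$, $r_n(t)=B\,t^\alpha(1-t)^\beta P_n(t;t)P_{n-1}(t;t)/h_{n-1}$ ($r_0=0$), $x_n(t)=\frac{\beta}{h_n}\int_0^1\frac{P_n(y)^2}{1-y}\,y^\alpha(1-y)^\beta(A+B\theta(y-t))\,dy$, $y_n(t)=\frac{\beta}{h_{n-1}}\int_0^1\frac{P_n(y)P_{n-1}(y)}{1-y}\,y^\alpha(1-y)^\beta(A+B\theta(y-t))\,dy$ ($y_0=0$). A prime denotes $d/dt$. *)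

theory Defs
  imports "HOL-Analysis.Analysis" "HOL-Computational_Algebra.Polynomial"
begin

text \<open>Heaviside step function (the value at 0 is immaterial for all quantities below
except pointwise evaluations at y = t, where it does not enter).\<close>
definition heaviside :: "real \<Rightarrow> real" where
  "heaviside x = (if 0 \<le> x then 1 else 0)"

definition jw :: "real \<Rightarrow> real \<Rightarrow> real \<Rightarrow> real \<Rightarrow> real \<Rightarrow> real \<Rightarrow> real" where
  "jw al be A B t x = x powr al * (1 - x) powr be * (A + B * heaviside (x - t))"

definition wint :: "real \<Rightarrow> real \<Rightarrow> real \<Rightarrow> real \<Rightarrow> real \<Rightarrow> (real \<Rightarrow> real) \<Rightarrow> real" where
  "wint al be A B t f = (LINT x:{0..1}|lborel. f x * jw al be A B t x)"

definition monic_OPS ::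
  "real \<Rightarrow> real \<Rightarrow> real \<Rightarrow> real \<Rightarrow> real \<Rightarrow> (nat \<Rightarrow> real poly) \<Rightarrow> bool" where
  "monic_OPS al be A B s Q \<longleftrightarrow>
     (\<forall>k. degree (Q k) = k \<and> lead_coeff (Q k) = 1) \<and>
     (\<forall>i j. i \<noteq> j \<longrightarrow> wint al be A B s (\<lambda>x. poly (Q i) x * poly (Q j) x) = 0)"

definition h_n :: "real \<Rightarrow> real \<Rightarrow> real \<Rightarrow> real \<Rightarrow> real \<Rightarrow> (real \<Rightarrow> nat \<Rightarrow> real poly) \<Rightarrow> nat \<Rightarrow> real" where
  "h_n al be A B t P k = wint al be A B t (\<lambda>x. (poly (P t k) x)\<^sup>2)"

definition p1 :: "(real \<Rightarrow> nat \<Rightarrow> real poly) \<Rightarrow> nat \<Rightarrow> real \<Rightarrow> real" where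
  "p1 P k t = coeff (P t k) (k - 1)"

definition r_n :: "real \<Rightarrow> real \<Rightarrow> real \<Rightarrow> real \<Rightarrow> real \<Rightarrow> (real \<Rightarrow> nat \<Rightarrow> real poly) \<Rightarrow> nat \<Rightarrow> real" where
  "r_n al be A B t P k = (if k = 0 then 0 else
     B * t powr al * (1 - t) powr be * poly (P t k) t * poly (P t (k - 1)) t
       / h_n al be A B t P (k - 1))"

definition x_n :: "real \<Rightarrow> real \<Rightarrow> real \<Rightarrow> real \<Rightarrow> real \<Rightarrow> (real \<Rightarrow> nat \<Rightarrow> real poly) \<Rightarrow> nat \<Rightarrow> real" where
  "x_n al be A B t P k = be / h_n al be A B t P k *
     wint al be A B t (\<lambda>y. (poly (P t k) y)\<^sup>2 / (1 - y))"

definition y_n :: "real \<Rightarrow> real \<Rightarrow> real \<Rightarrow> real \<Rightarrow> real \<Rightarrow> (real \<Rightarrow> nat \<Rightarrow> real poly) \<Rightarrow> nat \<Rightarrow> real" where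
  "y_n al be A B t P k = (if k = 0 then 0 else be / h_n al be A B t P (k - 1) *
     wint al be A B t (\<lambda>y. poly (P t k) y * poly (P t (k - 1)) y / (1 - y)))"

end

theory Submission
  imports Defs
begin

lemma heaviside_ind: "heaviside x = indicator {0..} x"
  by (simp add: heaviside_def indicator_def)

lemma heaviside_meas[measurable]: "heaviside \<in> borel_measurable borel"
  unfolding heaviside_ind[abs_def] by measurable

lemma poly_meas[measurable]: "poly (p::real poly) \<in> borel_measurable borel"
  by (intro borel_measurable_continuous_onI continuous_intros)

definition om :: "real \<Rightarrow> real \<Rightarrow> real \<Rightarrow> real \<Rightarrow> real \<Rightarrow> real \<Rightarrow> real" where
  "om al be A B s x = x powr al * (1 - x) powr (be - 1) * (A + B * heaviside (x - s))"

lemma om_integrable: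
  assumes "al > 0" "be > 0"
  shows "set_integrable lborel {0..1} (om al be A B s)"
proof (rule set_integrable_bound)
  show "set_integrable lborel {0..1} (\<lambda>x. (\<bar>A\<bar>+\<bar>B\<bar>) * (x powr (al + 1 - 1) * (1 - x) powr (be - 1)))"
    using integrable_Beta[of "al+1" be] assms by auto
  show "set_borel_measurable lborel {0..1} (om al be A B s)"
    unfolding set_borel_measurable_def om_def by measurable
  show "AE x in lborel. x \<in> {0..1} \<longrightarrow> norm (om al be A B s x) \<le> norm ((\<bar>A\<bar>+\<bar>B\<bar>) * (x powr (al + 1 - 1) * (1 - x) powr (be - 1)))"
  proof (intro AE_I2 impI)
    fix x :: real assume x: "x \<in> {0..1}"
    have h: "\<bar>A + B * heaviside (x - s)\<bar> \<le> \<bar>A\<bar>+\<bar>B\<bar>"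
      by (auto simp: heaviside_def)
    have "norm (om al be A B s x) = (x powr al * (1 - x) powr (be - 1)) * \<bar>A + B * heaviside (x - s)\<bar>"
      using x by (simp add: om_def abs_mult)
    also have "\<dots> \<le> (x powr al * (1 - x) powr (be - 1)) * (\<bar>A\<bar>+\<bar>B\<bar>)"
      by (intro mult_left_mono h) auto
    finally show "norm (om al be A B s x) \<le> norm ((\<bar>A\<bar>+\<bar>B\<bar>) * (x powr (al + 1 - 1) * (1 - x) powr (be - 1)))"
      by (simp add: abs_mult mult.commute)
  qed
qed

lemma poly_bounded01: obtains M where "\<And>x::real. x \<in> {0..1} \<Longrightarrow> \<bar>poly p x\<bar> \<le> M"
proof -
  have "compact (poly p ` {0..1::real})"
    by (intro compact_continuous_image continuous_intros) auto
  then obtain M where "\<forall>y\<in>poly p ` {0..1}. norm y \<le> M"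
    using compact_imp_bounded bounded_iff by metis
  then show ?thesis using that[of M] by auto
qed

lemma poly_om_integrable:
  assumes "al > 0" "be > 0"
  shows "set_integrable lborel {0..1} (\<lambda>x. poly p x * om al be A B s x)"
proof -
  obtain M where M: "\<And>x::real. x \<in> {0..1} \<Longrightarrow> \<bar>poly p x\<bar> \<le> M" using poly_bounded01[of p] by blast
  show ?thesis
  proof (rule set_integrable_bound)
    show "set_integrable lborel {0..1} (\<lambda>x. M * om al be A B s x)"
      using om_integrable[OF assms] by auto
    show "set_borel_measurable lborel {0..1} (\<lambda>x. poly p x * om al be A B s x)"
      unfolding set_borel_measurable_def om_def by measurable
    show "AE x in lborel. x \<in> {0..1} \<longrightarrow> norm (poly p x * om al be A B s x) \<le> norm (M * om al be A B s x)"
    proof (intro AE_I2 impI)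
      fix x :: real assume x: "x \<in> {0..1}"
      have "0 \<le> M" using M[OF x] by simp
      then show "norm (poly p x * om al be A B s x) \<le> norm (M * om al be A B s x)"
        using M[OF x] by (simp add: abs_mult mult_right_mono)
    qed
  qed
qed


definition WI where "WI al be A B s p = wint al be A B s (poly p)"
definition VI where "VI al be A B s p = (LINT x:{0..1}|lborel. poly p x * om al be A B s x)"

lemma jw_om: "x \<in> {0..1} \<Longrightarrow> jw al be A B s x = (1 - x) * om al be A B s x"
proof -
  assume x: "x \<in> {0..1}"
  show ?thesis
  proof (cases "x = 1")
    case True then show ?thesis by (simp add: jw_def om_def)
  next
    case False
    then have "1 - x > 0" using x by auto
    then have "(1 - x) powr be = (1 - x) * (1 - x) powr (be - 1)"
      using powr_add[of "1-x" 1 "be - 1"] by simp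
    then show ?thesis by (simp add: jw_def om_def)
  qed
qed

lemma WI_VI: "WI al be A B s p = VI al be A B s (p * [:1,-1:])"
  unfolding WI_def VI_def wint_def
  by (intro set_lebesgue_integral_cong) (auto simp: jw_om algebra_simps)

lemma VI_add: "al > 0 \<Longrightarrow> be > 0 \<Longrightarrow> VI al be A B s (p + q) = VI al be A B s p + VI al be A B s q"
  unfolding VI_def by (simp add: distrib_right set_integral_add poly_om_integrable)

lemma VI_smult: "VI al be A B s (smult c p) = c * VI al be A B s p"
  unfolding VI_def by (simp add: mult.assoc set_integral_mult_right)

lemma VI_minus: "VI al be A B s (- p) = - VI al be A B s p"
  using VI_smult[of al be A B s "-1" p] by simp

lemma VI_diff: "al > 0 \<Longrightarrow> be > 0 \<Longrightarrow> VI al be A B s (p - q) = VI al be A B s p - VI al be A B s q"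
  using VI_add[of al be A B s p "-q"] VI_minus[of al be A B s q] by simp

lemma VI_0[simp]: "VI al be A B s 0 = 0"
  unfolding VI_def by simp

lemma WI_add: "al > 0 \<Longrightarrow> be > 0 \<Longrightarrow> WI al be A B s (p + q) = WI al be A B s p + WI al be A B s q"
  unfolding WI_VI distrib_right by (rule VI_add)

lemma WI_smult: "WI al be A B s (smult c p) = c * WI al be A B s p"
  unfolding WI_VI mult_smult_left by (rule VI_smult)

lemma WI_diff: "al > 0 \<Longrightarrow> be > 0 \<Longrightarrow> WI al be A B s (p - q) = WI al be A B s p - WI al be A B s q"
  unfolding WI_VI left_diff_distrib by (rule VI_diff)

lemma WI_0[simp]: "WI al be A B s 0 = 0"
  by (simp add: WI_VI)

lemma VI_X: "al > 0 \<Longrightarrow> be > 0 \<Longrightarrow> VI al be A B s ([:0,1:] * f) = VI al be A B s f - WI al be A B s f"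
proof -
  assume a: "al > 0" "be > 0"
  have "[:0,1:] * f = f - f * [:1,-1:]" by (simp add: algebra_simps)
  then show ?thesis using a by (simp only: VI_diff WI_VI)
qed

lemma E1:
  assumes al: "al > 0" and be: "be > 0" and s: "s \<in> {0<..<1}"
  shows "(al+1+be) * WI al be A B s f - be * VI al be A B s f + WI al be A B s ([:0,1:] * pderiv f)
          = - B * (s powr (al+1) * (1-s) powr be * poly f s)"
proof -
  define g where "g x = x powr (al+1) * (1-x) powr be * poly f x" for x
  define g' where "g' x = (al+1) * x powr al * (1-x) powr be * poly f x - be * x powr (al+1) * (1-x) powr (be-1) * poly f x + x powr (al+1) * (1-x) powr be * poly (pderiv f) x" for x
  have der: "(g has_vector_derivative g' x) (at x)" if x: "x \<in> {0<..<1}" for x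
  proof -
    have "(g has_real_derivative g' x) (at x)"
      unfolding g_def g'_def using x
      by (rule_tac derivative_eq_intros refl | simp add: algebra_simps)+
    then show ?thesis by (simp add: has_real_derivative_iff_has_vector_derivative)
  qed
  have cont: "continuous_on {0..1} g"
    unfolding g_def using al be
    by (intro continuous_intros continuous_on_powr') auto
  have g0: "g 0 = 0" and g1: "g 1 = 0" by (simp_all add: g_def)
  have i1: "(g' has_integral g s - g 0) {0..s}"
    using s by (intro fundamental_theorem_of_calculus_interior der continuous_on_subset[OF cont]) auto
  have i2: "(g' has_integral g 1 - g s) {s..1}"
    using s by (intro fundamental_theorem_of_calculus_interior der continuous_on_subset[OF cont]) auto
  define G where "G x = g' x * (A + B * heaviside (x - s))" for x
  have j1: "(G has_integral A * g s) {0..s}"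
  proof (rule has_integral_spike_finite[of "{s}"])
    show "(( \<lambda>x. g' x * A) has_integral A * g s) {0..s}"
      using has_integral_mult_left[OF i1, of A] g0 by (simp add: mult.commute)
    show "\<And>x. x \<in> {0..s} - {s} \<Longrightarrow> G x = g' x * A"
      by (auto simp: G_def heaviside_def)
  qed auto
  have j2: "(G has_integral (A + B) * (- g s)) {s..1}"
  proof (rule has_integral_spike_finite[of "{}"])
    show "(( \<lambda>x. g' x * (A + B)) has_integral (A + B) * (- g s)) {s..1}"
      using has_integral_mult_left[OF i2, of "A + B"] g1 by (simp add: mult.commute)
    show "\<And>x. x \<in> {s..1} - {} \<Longrightarrow> G x = g' x * (A + B)"
      by (auto simp: G_def heaviside_def)
  qed auto
  have j: "(G has_integral - B * g s) {0..1}"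
    using has_integral_combine[OF _ _ j1 j2] s by (simp add: algebra_simps)
  define F where "F = smult (al+1+be) (f*[:1,-1:]) - smult be f + [:0,1:]*pderiv f*[:1,-1:]"
  have GF: "G x = poly F x * om al be A B s x" if x: "x \<in> {0..1} - {0,1}" for x
  proof -
    have x0: "x > 0" "1 - x > 0" using x by auto
    have e1: "x powr (al+1) = x * x powr al"
      using powr_add[of x al 1] x0 by simp
    have e2: "(1 - x) powr be = (1 - x) * (1 - x) powr (be - 1)"
      using powr_add[of "1-x" 1 "be - 1"] x0 by simp
    show ?thesis
      unfolding G_def g'_def F_def om_def e1 e2
      by (simp add: algebra_simps)
  qed
  have k: "((\<lambda>x. poly F x * om al be A B s x) has_integral - B * g s) {0..1}"
    by (rule has_integral_spike_finite[OF _ _ j, of "{0,1}"]) (use GF in auto)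
  have "VI al be A B s F = integral {0..1} (\<lambda>x. poly F x * om al be A B s x)"
    unfolding VI_def by (rule set_borel_integral_eq_integral(2)[OF poly_om_integrable[OF al be]])
  also have "\<dots> = - B * g s" using k by (rule integral_unique)
  finally have VF: "VI al be A B s F = - B * g s" .
  have "VI al be A B s F = (al+1+be) * WI al be A B s f - be * VI al be A B s f + WI al be A B s ([:0,1:] * pderiv f)"
    unfolding F_def using al be by (simp add: VI_add VI_diff VI_smult WI_VI)
  then show ?thesis using VF by (simp add: g_def)
qed


lemma poly_jw_integrable:
  assumes "al > 0" "be > 0"
  shows "set_integrable lborel {0..1} (\<lambda>x. poly p x * jw al be A B s x)"
proof -
  have "set_integrable lborel {0..1} (\<lambda>x. poly (p * [:1,-1:]) x * om al be A B s x)"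
    by (rule poly_om_integrable[OF assms])
  then show ?thesis
    by (subst (asm) set_integrable_cong[of lborel lborel "{0..1}" "{0..1}" _ "\<lambda>x. poly p x * jw al be A B s x"])
       (auto simp: jw_om algebra_simps)
qed

lemma W_pos:
  assumes al: "al > 0" and be: "be > 0" and A: "A \<ge> 0" and AB: "A + B \<ge> 0" and nz: "\<not> (A = 0 \<and> B = 0)"
    and s: "s \<in> {0<..<1}" and p: "p \<noteq> 0"
  shows "WI al be A B s (p * p) > 0"
proof -
  define f where "f x = indicator {0..1} x * (poly (p*p) x * jw al be A B s x)" for x :: real
  have jw_nn: "jw al be A B s x \<ge> 0" for x
    using A AB by (auto simp: jw_def heaviside_def)
  have f_nn: "f x \<ge> 0" for x
    unfolding f_def indicator_def using jw_nn by (simp add: poly_mult)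
  have int: "integrable lborel f"
    using poly_jw_integrable[OF al be, of "p*p" A B s] unfolding set_integrable_def f_def by simp
  have Weq: "WI al be A B s (p * p) = integral\<^sup>L lborel f"
    unfolding WI_def wint_def set_lebesgue_integral_def f_def by simp
  have ge: "integral\<^sup>L lborel f \<ge> 0" using f_nn by (simp add: integral_nonneg)
  obtain a b where ab: "a < b" and sub: "{a<..<b} \<subseteq> {0<..<1}"
    and pos: "\<And>x. x \<in> {a<..<b} \<Longrightarrow> jw al be A B s x > 0"
  proof (cases "A > 0")
    case True
    show ?thesis
    proof (rule that[of 0 s])
      fix x assume x: "x \<in> {0<..<s}"
      then have "x > 0" "1 - x > 0" using s by auto
      then show "jw al be A B s x > 0" using x True by (auto simp: jw_def heaviside_def)
    qed (use s in auto)
  next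
    case False
    then have B: "A + B > 0" using A AB nz by auto
    show ?thesis
    proof (rule that[of s 1])
      fix x assume x: "x \<in> {s<..<1}"
      then have "x > 0" "1 - x > 0" using s by auto
      then show "jw al be A B s x > 0" using x B by (auto simp: jw_def heaviside_def)
    qed (use s in auto)
  qed
  show ?thesis
  proof (rule ccontr)
    assume "\<not> ?thesis"
    then have "integral\<^sup>L lborel f = 0" using ge Weq by simp
    then have ae: "AE x in lborel. f x = 0"
      using integral_nonneg_eq_0_iff_AE[OF int] f_nn by simp
    have fin: "finite {x. poly p x = 0}" using poly_roots_finite[OF p] .
    have ae2: "AE x in lborel. x \<notin> {x. poly p x = 0}"
      by (rule AE_I'[of "{x. poly p x = 0}"]) (auto simp: emeasure_lborel_countable[OF countable_finite[OF fin]] null_sets_def)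
    have "AE x in lborel. x \<notin> {a<..<b}"
      using ae ae2
    proof eventually_elim
      case (elim x)
      show ?case
      proof
        assume x: "x \<in> {a<..<b}"
        then have "x \<in> {0..1}" using sub by auto
        then have "poly p x * poly p x * jw al be A B s x = 0" using elim(1) by (simp add: f_def)
        then show False using pos[OF x] elim(2) by simp
      qed
    qed
    then obtain N where N: "{x \<in> space lborel. \<not> x \<notin> {a<..<b}} \<subseteq> N" "emeasure lborel N = 0" "N \<in> sets lborel"
      by (rule AE_E)
    have "emeasure lborel {a<..<b} \<le> emeasure lborel N"
      using N by (intro emeasure_mono) auto
    then have "emeasure lborel {a<..<b} = 0" using N(2) by (simp only: le_zero_eq)
    moreover have "emeasure lborel {a<..<b} = ennreal (b - a)" using ab by (intro emeasure_lborel_Ioo) simp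
    ultimately have "b - a \<le> 0" by (simp only: ennreal_eq_0_iff)
    then show False using ab by simp
  qed
qed


locale jac =
  fixes al be A B :: real and P :: "real \<Rightarrow> nat \<Rightarrow> real poly"
  assumes al: "al > 0" and be: "be > 0" and A: "A \<ge> 0" and AB: "A + B \<ge> 0" and nz: "\<not> (A = 0 \<and> B = 0)"
    and OPS: "\<And>s. s \<in> {0<..<1} \<Longrightarrow> monic_OPS al be A B s (P s)"
begin

lemma deg0_smult: "degree (q::real poly) = 0 \<Longrightarrow> q = smult (coeff q 0) 1"
proof -
  assume "degree q = 0"
  then have "q = [:coeff q 0:]" using degree_0_id by metis
  also have "\<dots> = smult (coeff q 0) 1" by simp
  finally show ?thesis .
qed

abbreviation "W \<equiv> WI al be A B"
abbreviation "V \<equiv> VI al be A B"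
definition "hh s k = W s (P s k * P s k)"

lemma degP: "s \<in> {0<..<1} \<Longrightarrow> degree (P s k) = k"
  using OPS unfolding monic_OPS_def by blast
lemma leadP: "s \<in> {0<..<1} \<Longrightarrow> coeff (P s k) k = 1"
proof -
  assume "s \<in> {0<..<1}"
  then have "lead_coeff (P s k) = 1" using OPS unfolding monic_OPS_def by blast
  moreover have "degree (P s k) = k" using OPS \<open>s \<in> {0<..<1}\<close> unfolding monic_OPS_def by blast
  ultimately show ?thesis by simp
qed
lemma orthP: "s \<in> {0<..<1} \<Longrightarrow> i \<noteq> j \<Longrightarrow> W s (P s i * P s j) = 0"
proof -
  assume "s \<in> {0<..<1}" "i \<noteq> j"
  moreover have "poly (P s i * P s j) = (\<lambda>x. poly (P s i) x * poly (P s j) x)" by (rule ext) simp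
  ultimately show ?thesis using OPS unfolding monic_OPS_def WI_def by simp
qed
lemma P_nz: "s \<in> {0<..<1} \<Longrightarrow> P s k \<noteq> 0"
  by (metis leadP coeff_0 zero_neq_one)
lemma hh_pos: "s \<in> {0<..<1} \<Longrightarrow> hh s k > 0"
  unfolding hh_def using W_pos[OF al be A AB nz _ P_nz] by blast
lemma P0: "s \<in> {0<..<1} \<Longrightarrow> P s 0 = 1"
proof -
  assume s: "s \<in> {0<..<1}"
  have "P s 0 = smult (coeff (P s 0) 0) 1" using degP[OF s, of 0] by (rule deg0_smult)
  then show ?thesis using leadP[OF s, of 0] by simp
qed

lemma W_add: "W s (p + q) = W s p + W s q" using WI_add[OF al be] .
lemma W_diff: "W s (p - q) = W s p - W s q" using WI_diff[OF al be] .
lemma W_smult: "W s (smult c p) = c * W s p" using WI_smult .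
lemma V_add: "V s (p + q) = V s p + V s q" using VI_add[OF al be] .
lemma V_diff: "V s (p - q) = V s p - V s q" using VI_diff[OF al be] .
lemma V_smult: "V s (smult c p) = c * V s p" using VI_smult .

lemma degree_diff_le_lead:
  fixes p q :: "real poly"
  assumes "degree p \<le> Suc d" "degree q \<le> Suc d" "coeff p (Suc d) = coeff q (Suc d)"
  shows "degree (p - q) \<le> d"
proof (rule degree_le)
  show "\<forall>i>d. coeff (p - q) i = 0"
  proof (intro allI impI)
    fix i assume "d < i"
    then show "coeff (p - q) i = 0" using assms
      by (cases "i = Suc d") (auto simp: coeff_eq_0)
  qed
qed

lemma orth_le: "s \<in> {0<..<1} \<Longrightarrow> degree q \<le> d \<Longrightarrow> d < k \<Longrightarrow> W s (P s k * q) = 0"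
proof (induction d arbitrary: q)
  case 0
  have qq: "q = smult (coeff q 0) (P s 0)" using P0[OF 0(1)] deg0_smult[of q] 0 by auto
  have "P s k * q = smult (coeff q 0) (P s k * P s 0)" by (subst (1) qq) (simp only: mult_smult_right)
  then have "W s (P s k * q) = coeff q 0 * W s (P s k * P s 0)"
    by (simp only: W_smult)
  then show ?case using orthP[OF 0(1), of k 0] 0 by simp
next
  case (Suc d)
  define c where "c = coeff q (Suc d)"
  have "degree (q - smult c (P s (Suc d))) \<le> d"
    using Suc degP[OF Suc(2), of "Suc d"] leadP[OF Suc(2), of "Suc d"] unfolding c_def
    by (intro degree_diff_le_lead) auto
  then have r: "W s (P s k * (q - smult c (P s (Suc d)))) = 0"
    using Suc by auto
  have o: "W s (P s k * smult c (P s (Suc d))) = 0"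
    using orthP[OF Suc(2), of k "Suc d"] Suc(4) by (simp add: W_smult)
  have "P s k * q = P s k * (q - smult c (P s (Suc d))) + P s k * smult c (P s (Suc d))"
    by (simp add: algebra_simps)
  then show ?case using r o by (simp add: W_add)
qed

lemma orth: "s \<in> {0<..<1} \<Longrightarrow> degree q < k \<Longrightarrow> W s (P s k * q) = 0"
  using orth_le[of s q "degree q" k] by simp

lemma proj: "s \<in> {0<..<1} \<Longrightarrow> degree q \<le> k \<Longrightarrow> W s (P s k * q) = coeff q k * hh s k"
proof -
  assume s: "s \<in> {0<..<1}" and q: "degree q \<le> k"
  show ?thesis
  proof (cases k)
    case 0
    then have qq: "q = smult (coeff q 0) (P s 0)" using P0[OF s] q deg0_smult[of q] by auto
    have "P s k * q = smult (coeff q 0) (P s k * P s 0)" by (subst (1) qq) (simp only: mult_smult_right)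
    then have "W s (P s k * q) = coeff q 0 * W s (P s k * P s 0)"
      by (simp only: W_smult)
    then show ?thesis using 0 by (simp add: hh_def)
  next
    case (Suc d)
    define c where "c = coeff q k"
    have "degree (q - smult c (P s k)) \<le> d"
      using Suc q degP[OF s, of k] leadP[OF s, of k] unfolding c_def
      by (intro degree_diff_le_lead) auto
    then have r: "W s (P s k * (q - smult c (P s k))) = 0"
      using Suc s by (intro orth_le) auto
    have "P s k * q = P s k * (q - smult c (P s k)) + smult c (P s k * P s k)"
      by (simp add: algebra_simps)
    then show ?thesis using r by (simp add: W_add W_smult hh_def c_def)
  qed
qed

end

lemma coeff_Xd: "coeff (pCons 0 (pderiv p)) j = of_nat j * coeff (p::real poly) j"
  by (cases j) (auto simp: coeff_pderiv)

lemma degree_Xd: "degree (pCons 0 (pderiv p)) \<le> degree (p::real poly)"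
  by (rule degree_le) (auto simp: coeff_Xd coeff_eq_0)

lemma coeff_X2d: "coeff (pCons 0 (pCons 0 (pderiv p))) j = (if j = 0 then 0 else (of_nat j - 1) * coeff (p::real poly) (j - 1))"
  by (cases j) (auto simp: coeff_Xd)

lemma degree_le_coeffI: "(\<And>i. i > d \<Longrightarrow> coeff (p::real poly) i = 0) \<Longrightarrow> degree p \<le> d"
  by (rule degree_le) auto

context jac begin

lemma W_comm: "W s (p * q) = W s (q * p)" by (simp add: mult.commute)

lemma zero_test: "s \<in> {0<..<1} \<Longrightarrow> degree q \<le> k \<Longrightarrow> (\<And>j. j \<le> k \<Longrightarrow> W s (P s j * q) = 0) \<Longrightarrow> q = 0"
proof (induction k arbitrary: q)
  case 0
  have "coeff q 0 * hh s 0 = 0" using proj[OF 0(1) 0(2)] 0(3)[of 0] by simp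
  then have "coeff q 0 = 0" using hh_pos[OF 0(1), of 0] by simp
  then show ?case using 0(2) deg0_smult[of q] by auto
next
  case (Suc k)
  have "coeff q (Suc k) * hh s (Suc k) = 0" using proj[OF Suc(2) Suc(3)] Suc(4)[of "Suc k"] by simp
  then have c: "coeff q (Suc k) = 0" using hh_pos[OF Suc(2), of "Suc k"] by simp
  have "degree q \<le> k"
  proof (rule degree_le_coeffI)
    fix i assume "i > k"
    then show "coeff q i = 0" using c Suc(3) by (cases "i = Suc k") (auto simp: coeff_eq_0)
  qed
  then show ?case using Suc by auto
qed

definition "alc s k = W s (P s k * pCons 0 (P s k)) / hh s k"
definition "bec s k = (if k = 0 then 0 else hh s k / hh s (k - 1))"

lemma coeffP_high: "s \<in> {0<..<1} \<Longrightarrow> j > k \<Longrightarrow> coeff (P s k) j = 0"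
  using degP coeff_eq_0 by metis

lemma recP:
  assumes s: "s \<in> {0<..<1}"
  shows "pCons 0 (P s k) = P s (Suc k) + smult (alc s k) (P s k) + smult (bec s k) (P s (k - 1))"
proof -
  define d where "d = pCons 0 (P s k) - P s (Suc k) - smult (alc s k) (P s k) - smult (bec s k) (P s (k - 1))"
  have dg1: "degree (pCons 0 (P s k) - P s (Suc k)) \<le> k"
    using degP[OF s] leadP[OF s] by (intro degree_diff_le_lead) (auto simp: degree_pCons_eq_if)
  have dg2: "degree (smult (alc s k) (P s k)) \<le> k" using degP[OF s] by (simp add: degree_smult_le)
  have dg3: "degree (smult (bec s k) (P s (k - 1))) \<le> k"
    using degP[OF s, of "k - 1"] degree_smult_le[of "bec s k" "P s (k - 1)"] by linarith
  have dd: "degree d \<le> k" unfolding d_def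
    by (rule degree_diff_le[OF degree_diff_le[OF dg1 dg2] dg3])
  have "d = 0"
  proof (rule zero_test[OF s dd])
    fix j assume j: "j \<le> k"
    have e1: "W s (P s j * pCons 0 (P s k)) = (if j = k then alc s k * hh s k else if Suc j = k then hh s k else 0)"
    proof (cases "j = k")
      case True
      then show ?thesis using hh_pos[OF s, of k] by (simp add: alc_def W_comm)
    next
      case False
      have eq: "W s (P s j * pCons 0 (P s k)) = W s (P s k * pCons 0 (P s j))" by (simp add: mult.commute)
      have pr: "W s (P s k * pCons 0 (P s j)) = coeff (pCons 0 (P s j)) k * hh s k"
        using False j degP[OF s, of j] by (intro proj[OF s]) (auto simp: degree_pCons_eq_if)
      have co: "coeff (pCons 0 (P s j)) k = (if Suc j = k then 1 else 0)"
        using False j leadP[OF s, of j] coeffP_high[OF s, of j "k - 1"]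
        by (cases k) auto
      have "W s (P s j * pCons 0 (P s k)) = (if Suc j = k then 1 else 0) * hh s k"
        by (simp only: eq pr co)
      then show ?thesis using False by simp
    qed
    have e2: "W s (P s j * P s (Suc k)) = 0" using orthP[OF s] j by auto
    have e3: "W s (P s j * P s k) = (if j = k then hh s k else 0)" using orthP[OF s] by (simp add: hh_def)
    have e4: "bec s k * W s (P s j * P s (k - 1)) = (if Suc j = k then hh s k else 0)"
    proof (cases "k = 0")
      case True then show ?thesis by (simp add: bec_def)
    next
      case False
      show ?thesis
      proof (cases "Suc j = k")
        case True
        then show ?thesis using hh_pos[OF s, of "k - 1"] False by (auto simp: bec_def hh_def)
      next
        case F2: False
        then have "j \<noteq> k - 1" using False by auto
        then show ?thesis using orthP[OF s] F2 by simp
      qed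
    qed
    show "W s (P s j * d) = 0"
      unfolding d_def using e1 e2 e3 e4
      by (simp add: right_diff_distrib W_diff W_smult)
  qed
  then show ?thesis unfolding d_def by (simp add: algebra_simps)
qed

end

context jac begin

lemma E1': "s \<in> {0<..<1} \<Longrightarrow> (al+1+be) * W s f - be * V s f + W s (pCons 0 (pderiv f))
          = - B * (s powr (al+1) * (1-s) powr be * poly f s)"
  using E1[OF al be, of s A B f] by simp

definition "bw s = s powr al * (1 - s) powr be"
definition "c1 s k = (if k = 0 then 0 else coeff (P s k) (k - 1))"
definition "c2 s k = (if k < 2 then 0 else coeff (P s k) (k - 2))"
definition "RR s k = B * bw s * (poly (P s k) s)^2 / hh s k"
definition "rr s k = (if k = 0 then 0 else B * bw s * poly (P s k) s * poly (P s (k - 1)) s / hh s (k - 1))"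
definition "xx s k = be * V s (P s k * P s k) / hh s k"
definition "yy s k = (if k = 0 then 0 else be * V s (P s k * P s (k - 1)) / hh s (k - 1))"

lemma spow: "s \<in> {0<..<1} \<Longrightarrow> s powr (al+1) = s * s powr al"
  using powr_add[of s al 1] by simp

lemma projXd: "s \<in> {0<..<1} \<Longrightarrow> W s (P s k * pCons 0 (pderiv (P s k))) = of_nat k * hh s k"
  using proj[of s "pCons 0 (pderiv (P s k))" k] degree_Xd[of "P s k"] degP[of s k] leadP[of s k]
  by (simp add: coeff_Xd)

lemma D1_props:
  assumes s: "s \<in> {0<..<1}" and k: "k \<ge> 1"
  shows "degree (pCons 0 (pderiv (P s k)) - smult (of_nat k) (P s k)) \<le> k - 1"
    and "coeff (pCons 0 (pderiv (P s k)) - smult (of_nat k) (P s k)) (k - 1) = - c1 s k"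
proof -
  show "degree (pCons 0 (pderiv (P s k)) - smult (of_nat k) (P s k)) \<le> k - 1"
  proof (rule degree_le_coeffI)
    fix i assume i: "i > k - 1"
    show "coeff (pCons 0 (pderiv (P s k)) - smult (of_nat k) (P s k)) i = 0"
    proof (cases "i = k")
      case True then show ?thesis by (simp add: coeff_Xd)
    next
      case False then have "i > k" using i k by auto
      then show ?thesis using coeffP_high[OF s] by (simp add: coeff_Xd)
    qed
  qed
  show "coeff (pCons 0 (pderiv (P s k)) - smult (of_nat k) (P s k)) (k - 1) = - c1 s k"
    using k by (simp add: coeff_Xd c1_def of_nat_diff algebra_simps)
qed

lemma D2_props:
  assumes s: "s \<in> {0<..<1}"
  shows "degree (pCons 0 (pCons 0 (pderiv (P s k))) - smult (of_nat k) (pCons 0 (P s k))) \<le> k"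
    and "coeff (pCons 0 (pCons 0 (pderiv (P s k))) - smult (of_nat k) (pCons 0 (P s k))) k = - c1 s k"
    and "k \<ge> 1 \<Longrightarrow> coeff (pCons 0 (pCons 0 (pderiv (P s k))) - smult (of_nat k) (pCons 0 (P s k))) (k - 1) = - 2 * c2 s k"
proof -
  have cf: "coeff (pCons 0 (pCons 0 (pderiv (P s k))) - smult (of_nat k) (pCons 0 (P s k))) j
      = (if j = 0 then 0 else (of_nat j - 1 - of_nat k) * coeff (P s k) (j - 1))" for j
    by (cases j) (auto simp: coeff_X2d coeff_Xd algebra_simps)
  show "degree (pCons 0 (pCons 0 (pderiv (P s k))) - smult (of_nat k) (pCons 0 (P s k))) \<le> k"
  proof (rule degree_le_coeffI)
    fix i assume i: "i > k"
    show "coeff (pCons 0 (pCons 0 (pderiv (P s k))) - smult (of_nat k) (pCons 0 (P s k))) i = 0"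
    proof (cases "i = Suc k")
      case True then show ?thesis unfolding cf by simp
    next
      case False then have "i - 1 > k" using i by auto
      then show ?thesis using coeffP_high[OF s] unfolding cf by simp
    qed
  qed
  show "coeff (pCons 0 (pCons 0 (pderiv (P s k))) - smult (of_nat k) (pCons 0 (P s k))) k = - c1 s k"
    unfolding cf by (cases k) (simp_all add: c1_def)
  show "k \<ge> 1 \<Longrightarrow> coeff (pCons 0 (pCons 0 (pderiv (P s k))) - smult (of_nat k) (pCons 0 (P s k))) (k - 1) = - 2 * c2 s k"
  proof -
    assume k: "k \<ge> 1"
    show ?thesis
    proof (cases "k = 1")
      case True then show ?thesis unfolding cf by (simp add: c2_def)
    next
      case False
      then have "k \<ge> 2" using k by auto
      then show ?thesis unfolding cf by (simp add: c2_def of_nat_diff algebra_simps numeral_2_eq_2)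
    qed
  qed
qed

end

context jac begin

lemma spow': "s \<in> {0<..<1} \<Longrightarrow> s powr (1+al) = s * s powr al"
  using spow[of s] by (simp add: add.commute)

lemma Li:
  assumes s: "s \<in> {0<..<1}"
  shows "be * V s (P s k * P s k) = (2*k+1+al+be) * hh s k + B * s * bw s * (poly (P s k) s)^2"
proof -
  have d: "pCons 0 (pderiv (P s k * P s k)) = smult 2 (P s k * pCons 0 (pderiv (P s k)))"
    by (intro poly_ext) (simp add: pderiv_mult algebra_simps)
  have w: "W s (pCons 0 (pderiv (P s k * P s k))) = 2 * of_nat k * hh s k"
    unfolding d W_smult projXd[OF s] by simp
  have "(al+1+be) * hh s k - be * V s (P s k * P s k) + 2 * of_nat k * hh s k
      = - B * (s powr (al+1) * (1-s) powr be * poly (P s k * P s k) s)"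
    using E1'[OF s, of "P s k * P s k"] w by (simp add: hh_def)
  then show ?thesis by (simp add: spow[OF s] spow'[OF s] bw_def power2_eq_square algebra_simps)
qed

lemma Lii:
  assumes s: "s \<in> {0<..<1}" and k: "k \<ge> 1"
  shows "be * V s (P s k * P s (k - 1)) = - c1 s k * hh s (k - 1) + B * s * bw s * poly (P s k) s * poly (P s (k - 1)) s"
proof -
  define Q where "Q = P s (k - 1)"
  define D1 where "D1 = pCons 0 (pderiv (P s k)) - smult (of_nat k) (P s k)"
  have d: "pCons 0 (pderiv (P s k * Q)) = Q * pCons 0 (pderiv (P s k)) + P s k * pCons 0 (pderiv Q)"
    by (intro poly_ext) (simp add: pderiv_mult algebra_simps)
  have o1: "W s (P s k * pCons 0 (pderiv Q)) = 0"
  proof (rule orth[OF s])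
    show "degree (pCons 0 (pderiv Q)) < k"
      using degree_Xd[of Q] degP[OF s, of "k - 1"] k unfolding Q_def by linarith
  qed
  have o2: "W s (Q * P s k) = 0" using orthP[OF s, of "k - 1" k] k unfolding Q_def by simp
  have o3: "W s (P s k * Q) = 0" using orthP[OF s, of k "k - 1"] k unfolding Q_def by simp
  have e: "pCons 0 (pderiv (P s k)) = D1 + smult (of_nat k) (P s k)" unfolding D1_def by simp
  have p: "W s (Q * D1) = - c1 s k * hh s (k - 1)"
    using proj[OF s, of D1 "k - 1"] D1_props[OF s k] unfolding Q_def D1_def by simp
  have w2: "W s (Q * pCons 0 (pderiv (P s k))) = - c1 s k * hh s (k - 1)"
    unfolding e distrib_left W_add mult_smult_right W_smult p o2 by simp
  have "(al+1+be) * W s (P s k * Q) - be * V s (P s k * Q) + W s (pCons 0 (pderiv (P s k * Q)))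
      = - B * (s powr (al+1) * (1-s) powr be * poly (P s k * Q) s)"
    by (rule E1'[OF s])
  then have "- be * V s (P s k * Q) - c1 s k * hh s (k - 1)
      = - B * (s powr (al+1) * (1-s) powr be * poly (P s k * Q) s)"
    unfolding d W_add w2 o1 o3 by simp
  then show ?thesis unfolding Q_def by (simp add: spow[OF s] spow'[OF s] bw_def algebra_simps)
qed

lemma Liii:
  assumes s: "s \<in> {0<..<1}"
  shows "(2*k+2+al+be) * W s (pCons 0 (P s k * P s k)) - be * V s (P s k * P s k) + be * hh s k - 2 * c1 s k * hh s k
      = - B * s * s * bw s * (poly (P s k) s)^2"
proof -
  define D2 where "D2 = pCons 0 (pCons 0 (pderiv (P s k))) - smult (of_nat k) (pCons 0 (P s k))"
  have d: "pCons 0 (pderiv (pCons 0 (P s k * P s k))) = pCons 0 (P s k * P s k) + smult 2 (P s k * pCons 0 (pCons 0 (pderiv (P s k))))"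
    by (intro poly_ext) (simp add: pderiv_mult pderiv_pCons algebra_simps)
  have e: "pCons 0 (pCons 0 (pderiv (P s k))) = D2 + smult (of_nat k) (pCons 0 (P s k))" unfolding D2_def by simp
  have p: "W s (P s k * D2) = - c1 s k * hh s k"
    using proj[OF s, of D2 k] D2_props[OF s, of k] unfolding D2_def by simp
  have pk: "P s k * pCons 0 (P s k) = pCons 0 (P s k * P s k)" by simp
  have w2: "W s (P s k * pCons 0 (pCons 0 (pderiv (P s k)))) = - c1 s k * hh s k + of_nat k * W s (pCons 0 (P s k * P s k))"
    unfolding e distrib_left W_add mult_smult_right W_smult p pk by simp
  have vx: "V s (pCons 0 (P s k * P s k)) = V s (P s k * P s k) - hh s k"
    using VI_X[OF al be, of A B s "P s k * P s k"] by (simp add: hh_def)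
  have "(al+1+be) * W s (pCons 0 (P s k * P s k)) - be * V s (pCons 0 (P s k * P s k)) + W s (pCons 0 (pderiv (pCons 0 (P s k * P s k))))
      = - B * (s powr (al+1) * (1-s) powr be * poly (pCons 0 (P s k * P s k)) s)"
    by (rule E1'[OF s])
  then have "(al+1+be) * W s (pCons 0 (P s k * P s k)) - be * (V s (P s k * P s k) - hh s k) + W s (pCons 0 (P s k * P s k))
       + 2 * (- c1 s k * hh s k + of_nat k * W s (pCons 0 (P s k * P s k)))
      = - B * (s powr (al+1) * (1-s) powr be * poly (pCons 0 (P s k * P s k)) s)"
    unfolding d W_add W_smult w2 vx by simp
  then show ?thesis by (simp add: spow[OF s] spow'[OF s] bw_def power2_eq_square algebra_simps)
qed

lemma Liv:
  assumes s: "s \<in> {0<..<1}" and k: "k \<ge> 1"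
  shows "(2*k+1+al+be) * hh s k - be * V s (P s k * P s (k - 1)) + ((c1 s k)^2 - 2 * c2 s k) * hh s (k - 1)
      = - B * s * s * bw s * poly (P s k) s * poly (P s (k - 1)) s"
proof -
  define Q where "Q = P s (k - 1)"
  define D2 where "D2 = pCons 0 (pCons 0 (pderiv (P s k))) - smult (of_nat k) (pCons 0 (P s k))"
  have degQ: "degree Q = k - 1" unfolding Q_def using degP[OF s] by simp
  have lQ: "coeff Q (k - 1) = 1" unfolding Q_def using leadP[OF s] by simp
  have d: "pCons 0 (pderiv (pCons 0 (P s k * Q))) = pCons 0 (P s k * Q) + P s k * pCons 0 (pCons 0 (pderiv Q)) + Q * pCons 0 (pCons 0 (pderiv (P s k)))"
    by (intro poly_ext) (simp add: pderiv_mult pderiv_pCons algebra_simps)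
  have pq: "P s k * pCons 0 Q = pCons 0 (P s k * Q)" by simp
  have qp: "Q * pCons 0 (P s k) = pCons 0 (P s k * Q)" by (simp add: mult.commute)
  have wf: "W s (pCons 0 (P s k * Q)) = hh s k"
  proof -
    have "W s (P s k * pCons 0 Q) = coeff (pCons 0 Q) k * hh s k"
      using degQ k by (intro proj[OF s]) (simp add: degree_pCons_eq_if)
    moreover have "coeff (pCons 0 Q) k = 1" using lQ k by (cases k) auto
    ultimately show ?thesis using pq by simp
  qed
  have o3: "W s (P s k * Q) = 0" using orthP[OF s, of k "k - 1"] k unfolding Q_def by simp
  have o2: "W s (Q * P s k) = 0" using orthP[OF s, of "k - 1" k] k unfolding Q_def by simp
  have vx: "V s (pCons 0 (P s k * Q)) = V s (P s k * Q)"
    using VI_X[OF al be, of A B s "P s k * Q"] o3 by simp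
  have w1: "W s (P s k * pCons 0 (pCons 0 (pderiv Q))) = (of_nat k - 1) * hh s k"
  proof -
    have "degree (pCons 0 (pCons 0 (pderiv Q))) \<le> k"
    proof (rule degree_le_coeffI)
      fix i assume "i > k"
      then have "i - 1 > degree Q" using degQ k by auto
      then have "coeff Q (i - 1) = 0" by (rule coeff_eq_0)
      then show "coeff (pCons 0 (pCons 0 (pderiv Q))) i = 0" by (simp add: coeff_X2d)
    qed
    then have "W s (P s k * pCons 0 (pCons 0 (pderiv Q))) = coeff (pCons 0 (pCons 0 (pderiv Q))) k * hh s k"
      by (rule proj[OF s])
    then show ?thesis using lQ k by (simp add: coeff_X2d)
  qed
  have E: "D2 + smult (c1 s k) (P s k) = (D2 + smult (c1 s k) (P s k))" ..
  have degE: "degree (D2 + smult (c1 s k) (P s k)) \<le> k - 1"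
  proof (rule degree_le_coeffI)
    fix i assume i: "i > k - 1"
    show "coeff (D2 + smult (c1 s k) (P s k)) i = 0"
    proof (cases "i = k")
      case True
      then show ?thesis using D2_props(2)[OF s, of k] leadP[OF s, of k] unfolding D2_def by simp
    next
      case False
      then have "i > k" using i k by auto
      then show ?thesis using D2_props(1)[OF s, of k] coeffP_high[OF s, of k i] unfolding D2_def
        by (simp add: coeff_eq_0)
    qed
  qed
  have cE: "coeff (D2 + smult (c1 s k) (P s k)) (k - 1) = (c1 s k)^2 - 2 * c2 s k"
    using D2_props(3)[OF s k] k unfolding D2_def by (simp add: c1_def power2_eq_square)
  have wQD: "W s (Q * D2) = ((c1 s k)^2 - 2 * c2 s k) * hh s (k - 1)"
  proof -
    have "W s (Q * (D2 + smult (c1 s k) (P s k))) = ((c1 s k)^2 - 2 * c2 s k) * hh s (k - 1)"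
      using proj[OF s degE] cE unfolding Q_def by simp
    moreover have "W s (Q * (D2 + smult (c1 s k) (P s k))) = W s (Q * D2) + c1 s k * W s (Q * P s k)"
      unfolding distrib_left W_add mult_smult_right W_smult ..
    ultimately show ?thesis using o2 by simp
  qed
  have e: "pCons 0 (pCons 0 (pderiv (P s k))) = D2 + smult (of_nat k) (pCons 0 (P s k))" unfolding D2_def by simp
  have w2: "W s (Q * pCons 0 (pCons 0 (pderiv (P s k)))) = ((c1 s k)^2 - 2 * c2 s k) * hh s (k - 1) + of_nat k * hh s k"
    unfolding e distrib_left W_add mult_smult_right W_smult wQD qp wf ..
  have "(al+1+be) * W s (pCons 0 (P s k * Q)) - be * V s (pCons 0 (P s k * Q)) + W s (pCons 0 (pderiv (pCons 0 (P s k * Q))))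
      = - B * (s powr (al+1) * (1-s) powr be * poly (pCons 0 (P s k * Q)) s)"
    by (rule E1'[OF s])
  then have "(al+1+be) * hh s k - be * V s (P s k * Q) + hh s k + (of_nat k - 1) * hh s k
      + (((c1 s k)^2 - 2 * c2 s k) * hh s (k - 1) + of_nat k * hh s k)
      = - B * (s powr (al+1) * (1-s) powr be * poly (pCons 0 (P s k * Q)) s)"
    unfolding d W_add wf vx w1 w2 by simp
  then show ?thesis unfolding Q_def by (simp add: spow[OF s] spow'[OF s] bw_def algebra_simps)
qed

end

context jac begin

lemma hh_nz: "s \<in> {0<..<1} \<Longrightarrow> hh s k \<noteq> 0" using hh_pos[of s k] by simp

lemma L1: "s \<in> {0<..<1} \<Longrightarrow> xx s k = 2 * real k + 1 + al + be + s * RR s k"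
  using Li[of s k] hh_nz[of s k] unfolding xx_def RR_def
  by (simp add: field_simps)

lemma L2: "s \<in> {0<..<1} \<Longrightarrow> k \<ge> 1 \<Longrightarrow> c1 s k = s * rr s k - yy s k"
  using Lii[of s k] hh_nz[of s "k - 1"] unfolding yy_def rr_def
  by (simp add: field_simps)

lemma alc_eq: "s \<in> {0<..<1} \<Longrightarrow> W s (pCons 0 (P s k * P s k)) = alc s k * hh s k"
  using hh_nz[of s k] unfolding alc_def by simp

lemma L3: "s \<in> {0<..<1} \<Longrightarrow> (2 * real k + 2 + al + be) * alc s k = 2 * c1 s k - be + (2 * real k + 1 + al + be) * s + (1-s) * xx s k"
proof -
  assume s: "s \<in> {0<..<1}"
  have h: "hh s k \<noteq> 0" by (rule hh_nz[OF s])
  have a: "(2 * real k + 2 + al + be) * alc s k * hh s k - be * V s (P s k * P s k) + be * hh s k - 2 * c1 s k * hh s k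
      = - B * s * s * bw s * (poly (P s k) s)^2"
    using Liii[OF s, of k] alc_eq[OF s, of k] by (simp add: algebra_simps)
  have x: "be * V s (P s k * P s k) = xx s k * hh s k" unfolding xx_def using h by simp
  have r: "B * bw s * (poly (P s k) s)^2 = RR s k * hh s k" unfolding RR_def using h by simp
  have "((2 * real k + 2 + al + be) * alc s k - xx s k + be - 2 * c1 s k) * hh s k = (- s * s * RR s k) * hh s k"
    using a x r by algebra
  then have "(2 * real k + 2 + al + be) * alc s k - xx s k + be - 2 * c1 s k = - s * s * RR s k"
    by (rule mult_right_cancel[OF h, THEN iffD1])
  then show ?thesis using L1[OF s, of k] by (simp add: algebra_simps)
qed

lemma L4: "s \<in> {0<..<1} \<Longrightarrow> k \<ge> 1 \<Longrightarrow> 2 * c2 s k = (2 * real k + 1 + al + be) * bec s k + c1 s k + (c1 s k)^2 - s*(1-s) * rr s k"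
proof -
  assume s: "s \<in> {0<..<1}" and k: "k \<ge> 1"
  have h: "hh s (k - 1) \<noteq> 0" by (rule hh_nz[OF s])
  have b: "bec s k * hh s (k - 1) = hh s k" unfolding bec_def using h k by simp
  have r: "rr s k * hh s (k - 1) = B * bw s * poly (P s k) s * poly (P s (k - 1)) s" unfolding rr_def using h k by simp
  have "2 * c2 s k * hh s (k - 1) = ((2 * real k + 1 + al + be) * bec s k + c1 s k + (c1 s k)^2 - s*(1-s) * rr s k) * hh s (k - 1)"
    using Liv[OF s k] Lii[OF s k] b r by algebra
  then show ?thesis using h by simp
qed

lemma R1: "s \<in> {0<..<1} \<Longrightarrow> c1 s (Suc k) = c1 s k - alc s k"
proof -
  assume s: "s \<in> {0<..<1}"
  have "coeff (pCons 0 (P s k)) k = coeff (P s (Suc k) + smult (alc s k) (P s k) + smult (bec s k) (P s (k - 1))) k"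
    using recP[OF s, of k] by simp
  moreover have "coeff (pCons 0 (P s k)) k = c1 s k" by (cases k) (auto simp: c1_def)
  moreover have "bec s k * coeff (P s (k - 1)) k = 0"
    by (cases k) (auto simp: bec_def coeffP_high[OF s])
  ultimately show ?thesis using leadP[OF s, of k] by (simp add: c1_def)
qed

lemma R2: "s \<in> {0<..<1} \<Longrightarrow> k \<ge> 1 \<Longrightarrow> c2 s (Suc k) = c2 s k - alc s k * c1 s k - bec s k"
proof -
  assume s: "s \<in> {0<..<1}" and k: "k \<ge> 1"
  have "coeff (pCons 0 (P s k)) (k - 1) = coeff (P s (Suc k) + smult (alc s k) (P s k) + smult (bec s k) (P s (k - 1))) (k - 1)"
    using recP[OF s, of k] by simp
  moreover have "coeff (pCons 0 (P s k)) (k - 1) = c2 s k"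
  proof (cases "k = 1")
    case True then show ?thesis by (simp add: c2_def)
  next
    case False
    then obtain m where "k = Suc (Suc m)" using k by (cases k; cases "k - 1") auto
    then show ?thesis by (simp add: c2_def)
  qed
  moreover have "coeff (P s (Suc k)) (k - 1) = c2 s (Suc k)"
    using k by (simp add: c2_def)
  moreover have "coeff (P s k) (k - 1) = c1 s k" using k by (simp add: c1_def)
  ultimately show ?thesis using leadP[OF s, of "k - 1"] by simp
qed

lemma R3: "s \<in> {0<..<1} \<Longrightarrow> rr s (Suc k) + rr s k = (s - alc s k) * RR s k"
proof -
  assume s: "s \<in> {0<..<1}"
  have e: "s * poly (P s k) s = poly (P s (Suc k)) s + alc s k * poly (P s k) s + bec s k * poly (P s (k - 1)) s"
    using arg_cong[OF recP[OF s, of k], of "\<lambda>p. poly p s"] by simp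
  have h: "hh s k \<noteq> 0" by (rule hh_nz[OF s])
  have t: "bec s k * poly (P s (k - 1)) s * (B * bw s * poly (P s k) s) / hh s k = rr s k"
  proof (cases k)
    case 0 then show ?thesis by (simp add: bec_def rr_def)
  next
    case (Suc m)
    then show ?thesis using hh_nz[OF s, of m] h by (simp add: bec_def rr_def field_simps)
  qed
  have "(s - alc s k) * RR s k = (s * poly (P s k) s - alc s k * poly (P s k) s) * (B * bw s * poly (P s k) s) / hh s k"
    unfolding RR_def by (simp add: power2_eq_square field_simps)
  also have "\<dots> = (poly (P s (Suc k)) s + bec s k * poly (P s (k - 1)) s) * (B * bw s * poly (P s k) s) / hh s k"
    using e by simp
  also have "\<dots> = poly (P s (Suc k)) s * (B * bw s * poly (P s k) s) / hh s k + bec s k * poly (P s (k - 1)) s * (B * bw s * poly (P s k) s) / hh s k"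
    by (simp add: add_divide_distrib distrib_right)
  also have "\<dots> = rr s (Suc k) + rr s k" unfolding t by (simp add: rr_def)
  finally show ?thesis by simp
qed

lemma R4: "s \<in> {0<..<1} \<Longrightarrow> yy s (Suc k) + yy s k = (1 - alc s k) * xx s k - be"
proof -
  assume s: "s \<in> {0<..<1}"
  have h: "hh s k \<noteq> 0" by (rule hh_nz[OF s])
  have "V s (P s k * pCons 0 (P s k)) = V s (P s k * (P s (Suc k) + smult (alc s k) (P s k) + smult (bec s k) (P s (k - 1))))"
    using recP[OF s, of k] by simp
  then have e: "V s (P s k * P s k) - hh s k = V s (P s (Suc k) * P s k) + alc s k * V s (P s k * P s k) + bec s k * V s (P s k * P s (k - 1))"
    using VI_X[OF al be, of A B s "P s k * P s k"]
    by (simp add: distrib_left V_add V_smult hh_def mult.commute)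
  have t: "be * (bec s k * V s (P s k * P s (k - 1))) / hh s k = yy s k"
  proof (cases k)
    case 0 then show ?thesis by (simp add: bec_def yy_def)
  next
    case (Suc m)
    then show ?thesis using hh_nz[OF s, of m] h by (simp add: bec_def yy_def field_simps)
  qed
  have "(1 - alc s k) * xx s k - be = be * (V s (P s k * P s k) - hh s k - alc s k * V s (P s k * P s k)) / hh s k"
    unfolding xx_def using h by (simp add: field_simps)
  also have "\<dots> = be * V s (P s (Suc k) * P s k) / hh s k + be * (bec s k * V s (P s k * P s (k - 1))) / hh s k"
    unfolding e by (simp add: field_simps add_divide_distrib)
  also have "\<dots> = yy s (Suc k) + yy s k" unfolding t by (simp add: yy_def)
  finally show ?thesis by simp
qed

end

lemma alg_step:
  fixes k al be s x y r R b a c1 c2 c1' c2' r' y' b' :: real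
  assumes L1: "x = 2 * k + 1 + al + be + s * R"
  and L2: "c1 = s * r - y"
  and L3: "(2 * k + 2 + al + be) * a = 2 * c1 - be + (2 * k + 1 + al + be) * s + (1-s) * x"
  and L4: "2 * c2 = (2 * k + 1 + al + be) * b + c1 + c1^2 - s*(1-s) * r"
  and IH: "(2 * k - 1 + al + be) * (2 * k + 1 + al + be) * b = c1^2 + (2 * k + al) * c1 + (2 * k + al + be) * (1-s) * y + k * (k + al) * s"
  and R1: "c1' = c1 - a"
  and R2: "c2' = c2 - a * c1 - b"
  and R3: "r' + r = (s - a) * R"
  and R4: "y' + y = (1 - a) * x - be"
  and L4': "2 * c2' = (2 * k + 3 + al + be) * b' + c1' + c1'^2 - s*(1-s) * r'"
  shows "(2 * k + 1 + al + be) * (2 * k + 3 + al + be) * b' = c1'^2 + (2 * k + 2 + al) * c1' + (2 * k + 2 + al + be) * (1-s) * y' + (k+1) * (k + 1 + al) * s"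
  using assms by algebra

lemma alg_base:
  fixes al be s x0 R0 a0 c1 r y b :: real
  assumes "x0 = 1 + al + be + s * R0"
  and "(2 + al + be) * a0 = 0 - be + (1 + al + be) * s + (1-s) * x0"
  and "c1 = 0 - a0"
  and "r + 0 = (s - a0) * R0"
  and "y + 0 = (1 - a0) * x0 - be"
  and "2 * 0 = (3 + al + be) * b + c1 + c1^2 - s*(1-s) * r"
  shows "(1 + al + be) * (3 + al + be) * b = c1^2 + (2 + al) * c1 + (2 + al + be) * (1-s) * y + (1 + al) * s"
  using assms by algebra

context jac begin

lemma Id4:
  assumes s: "s \<in> {0<..<1}" and k: "k \<ge> 1"
  shows "(2 * real k - 1 + al + be) * (2 * real k + 1 + al + be) * bec s k
       = (c1 s k)^2 + (2 * real k + al) * c1 s k + (2 * real k + al + be) * (1-s) * yy s k + real k * (real k + al) * s"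
  using k
proof (induction k rule: nat_induct_at_least)
  case base
  have "(1 + al + be) * (3 + al + be) * bec s 1 = (c1 s 1)^2 + (2 + al) * c1 s 1 + (2 + al + be) * (1-s) * yy s 1 + (1 + al) * s"
  proof (rule alg_base)
    show "xx s 0 = 1 + al + be + s * RR s 0" using L1[OF s, of 0] by simp
    show "(2 + al + be) * alc s 0 = 0 - be + (1 + al + be) * s + (1-s) * xx s 0"
      using L3[OF s, of 0] by (simp add: c1_def)
    show "c1 s 1 = 0 - alc s 0" using R1[OF s, of 0] by (simp add: c1_def)
    show "rr s 1 + 0 = (s - alc s 0) * RR s 0" using R3[OF s, of 0] by (simp add: rr_def)
    show "yy s 1 + 0 = (1 - alc s 0) * xx s 0 - be" using R4[OF s, of 0] by (simp add: yy_def)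
    show "2 * 0 = (3 + al + be) * bec s 1 + c1 s 1 + (c1 s 1)^2 - s*(1-s) * rr s 1"
      using L4[OF s, of 1] by (simp add: c2_def)
  qed
  then show ?case by simp
next
  case (Suc n)
  have L4': "2 * c2 s (Suc n) = (2 * real n + 3 + al + be) * bec s (Suc n) + c1 s (Suc n) + (c1 s (Suc n))^2 - s*(1-s) * rr s (Suc n)"
    using L4[OF s, of "Suc n"] by (simp add: algebra_simps)
  have "(2 * real n + 1 + al + be) * (2 * real n + 3 + al + be) * bec s (Suc n) = (c1 s (Suc n))^2 + (2 * real n + 2 + al) * c1 s (Suc n) + (2 * real n + 2 + al + be) * (1-s) * yy s (Suc n) + (real n + 1) * (real n + 1 + al) * s"
    by (rule alg_step[OF L1[OF s] L2[OF s Suc(1)] L3[OF s] L4[OF s Suc(1)] Suc(2) R1[OF s] R2[OF s Suc(1)] R3[OF s] R4[OF s] L4'])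
  then show ?case by (simp add: algebra_simps)
qed

end

lemma poly_sum_N: "degree (p::real poly) \<le> N \<Longrightarrow> poly p x = (\<Sum>j\<le>N. coeff p j * x ^ j)"
proof -
  assume d: "degree p \<le> N"
  have "poly p x = (\<Sum>j\<le>degree p. coeff p j * x ^ j)" by (simp add: poly_altdef)
  also have "\<dots> = (\<Sum>j\<le>N. coeff p j * x ^ j)"
    using d by (intro sum.mono_neutral_left) (auto simp: coeff_eq_0)
  finally show ?thesis .
qed

context jac begin

definition "mu j s = integral {s..1} (\<lambda>x. x ^ j * bw x)"

lemma bw_cont: "continuous_on {0..1} bw"
  unfolding bw_def[abs_def] using al be
  by (intro continuous_intros continuous_on_powr') auto

lemma f_cont: "continuous_on {0..1} (\<lambda>x. g x * bw x)" if "continuous_on {0..1} g"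
  using that bw_cont by (intro continuous_intros) auto

lemma int_expand:
  assumes u: "u \<in> {0..1}" and d: "degree p \<le> N"
  shows "integral {u..1} (\<lambda>x. poly p x * bw x) = (\<Sum>j\<le>N. coeff p j * mu j u)"
proof -
  have ci: "(\<lambda>x. x ^ j * bw x) integrable_on {u..1}" for j
    using u by (intro integrable_continuous_interval continuous_on_subset[OF f_cont]) (auto intro: continuous_intros)
  have "integral {u..1} (\<lambda>x. poly p x * bw x) = integral {u..1} (\<lambda>x. \<Sum>j\<le>N. coeff p j * (x ^ j * bw x))"
    using d by (intro integral_cong) (simp add: poly_sum_N sum_distrib_right mult.assoc)
  also have "\<dots> = (\<Sum>j\<le>N. integral {u..1} (\<lambda>x. coeff p j * (x ^ j * bw x)))"
    using integrable_on_cmult_left[OF ci, where c="coeff p _"] by (intro integral_sum) auto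
  also have "\<dots> = (\<Sum>j\<le>N. coeff p j * mu j u)"
    unfolding mu_def by simp
  finally show ?thesis .
qed

lemma W_expand:
  assumes s: "s \<in> {0<..<1}" and d: "degree p \<le> N"
  shows "W s p = (\<Sum>j\<le>N. coeff p j * (A * mu j 0 + B * mu j s))"
proof -
  define f where "f x = poly p x * bw x" for x
  have cf: "continuous_on {0..1} f" unfolding f_def by (intro f_cont continuous_intros)
  have fi: "f integrable_on {0..1}" using cf by (rule integrable_continuous_interval)
  have fi2: "(\<lambda>x. if x \<in> {s..} then f x else 0) integrable_on {0..1}"
  proof -
    have eq: "{s..} \<inter> {0..1} = {s..1::real}" using s by auto
    have "f integrable_on {s..1}" using s
      by (intro integrable_continuous_interval continuous_on_subset[OF cf]) auto
    then show ?thesis unfolding integrable_restrict_Int eq .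
  qed
  have "W s p = integral {0..1} (\<lambda>x. poly p x * jw al be A B s x)"
    unfolding WI_def wint_def by (rule set_borel_integral_eq_integral(2)[OF poly_jw_integrable[OF al be]])
  also have "\<dots> = integral {0..1} (\<lambda>x. A * f x + B * (if x \<in> {s..} then f x else 0))"
    by (intro integral_cong) (auto simp: f_def jw_def bw_def heaviside_def algebra_simps)
  also have "\<dots> = A * integral {0..1} f + B * integral {0..1} (\<lambda>x. if x \<in> {s..} then f x else 0)"
    using integral_add[OF integrable_on_cmult_left[OF fi, of A] integrable_on_cmult_left[OF fi2, of B]] by simp
  also have "integral {0..1} (\<lambda>x. if x \<in> {s..} then f x else 0) = integral {s..1} f"
    unfolding integral_restrict_Int using s by (intro arg_cong2[where f=integral]) auto
  also have "integral {0..1} f = (\<Sum>j\<le>N. coeff p j * mu j 0)"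
    unfolding f_def using d by (intro int_expand) auto
  also have "integral {s..1} f = (\<Sum>j\<le>N. coeff p j * mu j s)"
    unfolding f_def using d s by (intro int_expand) auto
  finally show ?thesis by (simp add: sum_distrib_left sum.distrib algebra_simps)
qed

lemma mu_deriv:
  assumes t: "t \<in> {0<..<1}"
  shows "(mu j has_real_derivative - (t ^ j * bw t)) (at t)"
proof -
  have "((\<lambda>x. integral {x..1} (\<lambda>x. x ^ j * bw x)) has_real_derivative - (t ^ j * bw t)) (at t within {0..1})"
    using t by (intro integral_has_real_derivative' f_cont continuous_intros) auto
  moreover have "at t within {0..1} = at t"
    using t by (intro at_within_interior) auto
  ultimately show ?thesis unfolding mu_def[abs_def] by simp
qed

end

definition cv :: "real \<Rightarrow> (real \<Rightarrow> real poly) \<Rightarrow> bool" where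
  "cv t q \<longleftrightarrow> (\<forall>j. ((\<lambda>s. coeff (q s) j) \<longlongrightarrow> coeff (q t) j) (at t))"

lemma cv_const: "cv t (\<lambda>s. p)" unfolding cv_def by simp

lemma cv_add: "cv t q \<Longrightarrow> cv t r \<Longrightarrow> cv t (\<lambda>s. q s + r s)"
  unfolding cv_def by (auto intro: tendsto_intros)

lemma cv_diff: "cv t q \<Longrightarrow> cv t r \<Longrightarrow> cv t (\<lambda>s. q s - r s)"
  unfolding cv_def by (auto intro: tendsto_intros)

lemma cv_smult: "((\<lambda>s. c s) \<longlongrightarrow> c t) (at t) \<Longrightarrow> cv t q \<Longrightarrow> cv t (\<lambda>s. smult (c s) (q s))"
  unfolding cv_def by (auto intro: tendsto_intros)

lemma cv_pCons0: "cv t q \<Longrightarrow> cv t (\<lambda>s. pCons 0 (q s))"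
  unfolding cv_def
proof (intro allI)
  fix j assume h: "\<forall>j. ((\<lambda>s. coeff (q s) j) \<longlongrightarrow> coeff (q t) j) (at t)"
  show "((\<lambda>s. coeff (pCons 0 (q s)) j) \<longlongrightarrow> coeff (pCons 0 (q t)) j) (at t)"
    using h by (cases j) auto
qed

lemma cv_mult: "cv t q \<Longrightarrow> cv t r \<Longrightarrow> cv t (\<lambda>s. q s * r s)"
  unfolding cv_def coeff_mult by (auto intro!: tendsto_intros)

lemma cv_cong: "cv t q \<Longrightarrow> eventually (\<lambda>s. q s = r s) (at t) \<Longrightarrow> q t = r t \<Longrightarrow> cv t r"
  unfolding cv_def
proof (intro allI)
  fix j assume h: "\<forall>j. ((\<lambda>s. coeff (q s) j) \<longlongrightarrow> coeff (q t) j) (at t)"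
    and e: "eventually (\<lambda>s. q s = r s) (at t)" and qt: "q t = r t"
  have "eventually (\<lambda>s. coeff (q s) j = coeff (r s) j) (at t)" using e by eventually_elim simp
  then show "((\<lambda>s. coeff (r s) j) \<longlongrightarrow> coeff (r t) j) (at t)"
    using h qt Lim_transform_eventually by metis
qed

context jac begin

lemma ev01: "(t::real) \<in> {0<..<1} \<Longrightarrow> eventually (\<lambda>s. s \<in> {0<..<1}) (at t)"
  by (rule eventually_at_in_open') (simp_all add: open_greaterThanLessThan)

lemma mu_cont: "t \<in> {0<..<1} \<Longrightarrow> ((\<lambda>s. mu j s) \<longlongrightarrow> mu j t) (at t)"
  using DERIV_isCont[OF mu_deriv[of t j]] by (simp add: isCont_def)

lemma W_tendsto:
  assumes t: "t \<in> {0<..<1}" and q: "cv t q" and dg: "eventually (\<lambda>s. degree (q s) \<le> N) (at t)"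
    and dgt: "degree (q t) \<le> N"
  shows "((\<lambda>s. W s (q s)) \<longlongrightarrow> W t (q t)) (at t)"
proof -
  have l: "((\<lambda>s. \<Sum>j\<le>N. coeff (q s) j * (A * mu j 0 + B * mu j s)) \<longlongrightarrow> (\<Sum>j\<le>N. coeff (q t) j * (A * mu j 0 + B * mu j t))) (at t)"
    using q mu_cont[OF t] unfolding cv_def by (auto intro!: tendsto_intros)
  have "eventually (\<lambda>s. (\<Sum>j\<le>N. coeff (q s) j * (A * mu j 0 + B * mu j s)) = W s (q s)) (at t)"
    using dg ev01[OF t] by eventually_elim (simp add: W_expand)
  then have "((\<lambda>s. W s (q s)) \<longlongrightarrow> (\<Sum>j\<le>N. coeff (q t) j * (A * mu j 0 + B * mu j t))) (at t)"
    by (rule Lim_transform_eventually[OF l])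
  then show ?thesis using W_expand[OF t dgt] by simp
qed

lemma evdeg: assumes t: "t \<in> {0<..<1}" shows "eventually (\<lambda>s. degree (P s k) = k) (at t)"
  using ev01[OF t] by (rule eventually_mono) (rule degP)

lemma hh_tendsto:
  assumes t: "t \<in> {0<..<1}" and c: "cv t (\<lambda>s. P s k)"
  shows "((\<lambda>s. hh s k) \<longlongrightarrow> hh t k) (at t)"
  unfolding hh_def
proof (rule W_tendsto[of t "\<lambda>s. P s k * P s k" "2 * k"])
  show "cv t (\<lambda>s. P s k * P s k)" by (rule cv_mult[OF c c])
  show "eventually (\<lambda>s. degree (P s k * P s k) \<le> 2 * k) (at t)"
    using evdeg[OF t, of k] by eventually_elim (auto intro: order.trans[OF degree_mult_le])
  show "degree (P t k * P t k) \<le> 2 * k" using degP[OF t, of k] by (auto intro: order.trans[OF degree_mult_le])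
qed (rule t)

lemma alc_tendsto: "t \<in> {0<..<1} \<Longrightarrow> cv t (\<lambda>s. P s k) \<Longrightarrow> ((\<lambda>s. alc s k) \<longlongrightarrow> alc t k) (at t)"
proof -
  assume t: "t \<in> {0<..<1}" and c: "cv t (\<lambda>s. P s k)"
  have "((\<lambda>s. W s (P s k * pCons 0 (P s k))) \<longlongrightarrow> W t (P t k * pCons 0 (P t k))) (at t)"
  proof (rule W_tendsto[of t _ "2 * k + 1"])
    show "cv t (\<lambda>s. P s k * pCons 0 (P s k))" using c by (intro cv_mult cv_pCons0)
    have "degree (P s k * pCons 0 (P s k)) \<le> 2 * k + 1" if "degree (P s k) = k" for s
      using that degree_mult_le[of "P s k" "pCons 0 (P s k)"] by (simp add: degree_pCons_eq_if split: if_splits)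
    then show "eventually (\<lambda>s. degree (P s k * pCons 0 (P s k)) \<le> 2 * k + 1) (at t)"
      using evdeg[OF t, of k] by (rule eventually_mono[rotated]) 
    show "degree (P t k * pCons 0 (P t k)) \<le> 2 * k + 1"
      using degP[OF t, of k] degree_mult_le[of "P t k" "pCons 0 (P t k)"] by (simp add: degree_pCons_eq_if split: if_splits)
  qed (use t in auto)
  then show ?thesis unfolding alc_def
    using hh_tendsto[OF t c] hh_nz[OF t, of k] by (intro tendsto_divide) auto
qed

lemma bec_tendsto: "t \<in> {0<..<1} \<Longrightarrow> cv t (\<lambda>s. P s k) \<Longrightarrow> cv t (\<lambda>s. P s (Suc k)) \<Longrightarrow> ((\<lambda>s. bec s (Suc k)) \<longlongrightarrow> bec t (Suc k)) (at t)"
  unfolding bec_def using hh_tendsto hh_nz by (auto intro!: tendsto_divide)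

lemma cvP_pair: "t \<in> {0<..<1} \<Longrightarrow> cv t (\<lambda>s. P s k) \<and> cv t (\<lambda>s. P s (Suc k))"
proof (induction k)
  case 0
  have c0: "cv t (\<lambda>s. P s 0)"
    by (rule cv_cong[OF cv_const[of t 1]]) (use ev01[OF 0] P0 0 in \<open>auto elim: eventually_mono\<close>)
  have "cv t (\<lambda>s. pCons 0 (P s 0) - smult (alc s 0) (P s 0))"
    by (intro cv_diff cv_pCons0 cv_smult c0 alc_tendsto[OF 0])
  then have "cv t (\<lambda>s. P s 1)"
    by (rule cv_cong) (use ev01[OF 0] recP[of _ 0] recP[OF 0, of 0] in \<open>auto elim!: eventually_mono simp: bec_def\<close>)
  then show ?case using c0 by simp
next
  case (Suc k)
  then have c1: "cv t (\<lambda>s. P s k)" and c2: "cv t (\<lambda>s. P s (Suc k))" by auto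
  have "cv t (\<lambda>s. pCons 0 (P s (Suc k)) - smult (alc s (Suc k)) (P s (Suc k)) - smult (bec s (Suc k)) (P s k))"
    by (intro cv_diff cv_pCons0 cv_smult c1 c2 alc_tendsto[OF Suc(2)] bec_tendsto[OF Suc(2)])
  then have "cv t (\<lambda>s. P s (Suc (Suc k)))"
    by (rule cv_cong) (use ev01[OF Suc(2)] recP[of _ "Suc k"] recP[OF Suc(2), of "Suc k"] in \<open>auto elim!: eventually_mono simp: algebra_simps\<close>)
  then show ?case using c2 by simp
qed

lemma cvP: "t \<in> {0<..<1} \<Longrightarrow> cv t (\<lambda>s. P s k)"
  using cvP_pair by blast

end

context jac begin

lemma p1_diff_eq:
  assumes t: "t \<in> {0<..<1}" and s: "s \<in> {0<..<1}" and n: "n \<ge> 1"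
  shows "(coeff (P s n) (n - 1) - coeff (P t n) (n - 1)) * hh s (n - 1)
       = - B * (\<Sum>j\<le>2*n. coeff (P s (n - 1) * P t n) j * (mu j s - mu j t))"
proof -
  define q where "q = P s (n - 1) * P t n"
  have dq: "degree q \<le> 2 * n"
    unfolding q_def using degree_mult_le[of "P s (n - 1)" "P t n"] degP[OF s, of "n - 1"] degP[OF t, of n] by simp
  have dd: "degree (P s n - P t n) \<le> n - 1"
    using degP[OF s, of n] degP[OF t, of n] leadP[OF s, of n] leadP[OF t, of n] n
    by (intro degree_diff_le_lead) auto
  have a: "W s (P s (n - 1) * (P s n - P t n)) = (coeff (P s n) (n - 1) - coeff (P t n) (n - 1)) * hh s (n - 1)"
    using proj[OF s dd] by simp
  have b: "W s (P s (n - 1) * P s n) = 0" using orthP[OF s, of "n - 1" n] n by simp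
  have c: "W t q = 0"
  proof -
    have "W t (P t n * P s (n - 1)) = 0"
      using degP[OF s, of "n - 1"] n by (intro orth[OF t]) auto
    then show ?thesis unfolding q_def by (simp add: mult.commute)
  qed
  have e: "W s q = - ((coeff (P s n) (n - 1) - coeff (P t n) (n - 1)) * hh s (n - 1))"
    using a b unfolding q_def by (simp add: right_diff_distrib W_diff)
  have "W s q - W t q = B * (\<Sum>j\<le>2*n. coeff q j * (mu j s - mu j t))"
    using W_expand[OF s dq] W_expand[OF t dq]
    by (simp add: sum_subtractf[symmetric] sum_distrib_left algebra_simps)
  then show ?thesis using c e unfolding q_def by simp
qed

lemma p1_deriv:
  assumes t: "t \<in> {0<..<1}" and n: "n \<ge> 1"
  shows "((\<lambda>s. coeff (P s n) (n - 1)) has_real_derivative rr t n) (at t)"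
proof -
  define q where "q s = P s (n - 1) * P t n" for s
  define F where "F s = - B * (\<Sum>j\<le>2*n. coeff (q s) j * ((mu j s - mu j t) / (s - t))) / hh s (n - 1)" for s
  have ev: "eventually (\<lambda>s. (coeff (P s n) (n - 1) - coeff (P t n) (n - 1)) / (s - t) = F s) (at t)"
  proof -
    have ne: "eventually (\<lambda>s. s \<noteq> t) (at t)" by (auto simp: eventually_at_filter)
    show ?thesis
    using ev01[OF t] ne
  proof eventually_elim
    case (elim s)
    then have s: "s \<in> {0<..<1}" and st: "s \<noteq> t" by auto
    have h: "hh s (n - 1) \<noteq> 0" by (rule hh_nz[OF s])
    define S where "S = (\<Sum>j\<le>2*n. coeff (q s) j * (mu j s - mu j t))"
    have eq: "(coeff (P s n) (n - 1) - coeff (P t n) (n - 1)) = - B * S / hh s (n - 1)"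
      using p1_diff_eq[OF t s n] h unfolding q_def S_def by (simp add: field_simps)
    have st': "s - t \<noteq> 0" using st by simp
    have d: "(\<Sum>j\<le>2*n. coeff (q s) j * ((mu j s - mu j t) / (s - t))) = S / (s - t)"
      unfolding S_def by (simp add: sum_divide_distrib)
    show ?case unfolding F_def d eq using h st' by (simp add: field_simps)
  qed
  qed
  have cq: "cv t q" unfolding q_def by (intro cv_mult cvP[OF t] cv_const)
  have lim: "(F \<longlongrightarrow> - B * (\<Sum>j\<le>2*n. coeff (q t) j * (- (t ^ j * bw t))) / hh t (n - 1)) (at t)"
    unfolding F_def
  proof (intro tendsto_intros)
    show "hh t (n - 1) \<noteq> 0" by (rule hh_nz[OF t])
    show "((\<lambda>s. hh s (n - 1)) \<longlongrightarrow> hh t (n - 1)) (at t)" by (rule hh_tendsto[OF t cvP[OF t]])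
    fix j
    show "((\<lambda>s. coeff (q s) j) \<longlongrightarrow> coeff (q t) j) (at t)" using cq unfolding cv_def by blast
    show "((\<lambda>s. (mu j s - mu j t) / (s - t)) \<longlongrightarrow> - (t ^ j * bw t)) (at t)"
      using mu_deriv[OF t, of j] unfolding has_field_derivative_iff by simp
  qed
  have val: "- B * (\<Sum>j\<le>2*n. coeff (q t) j * (- (t ^ j * bw t))) / hh t (n - 1) = rr t n"
  proof -
    have dq: "degree (q t) \<le> 2 * n"
      unfolding q_def using degree_mult_le[of "P t (n - 1)" "P t n"] degP[OF t, of "n - 1"] degP[OF t, of n] by simp
    have "(\<Sum>j\<le>2*n. coeff (q t) j * (- (t ^ j * bw t))) = - (bw t * poly (q t) t)"
      using poly_sum_N[OF dq, of t] by (simp add: sum_distrib_left sum_negf algebra_simps)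
    then show ?thesis using n unfolding rr_def q_def by (simp add: algebra_simps)
  qed
  have "((\<lambda>s. (coeff (P s n) (n - 1) - coeff (P t n) (n - 1)) / (s - t)) \<longlongrightarrow> rr t n) (at t)"
    using Lim_transform_eventually[OF lim] ev val by (simp add: eq_commute)
  then show ?thesis unfolding has_field_derivative_iff .
qed

end

lemma wint_sq: "wint al be A B s (\<lambda>x. (poly p x)\<^sup>2) = WI al be A B s (p * p)"
  unfolding WI_def by (simp add: power2_eq_square poly_mult[abs_def])

lemma div_pw: "y \<in> {0..1} \<Longrightarrow> poly p y / (1 - y) * jw al be A B s y = poly p y * om al be A B s y"
proof (cases "y = 1")
  case True then show ?thesis by (simp add: om_def)
next
  case False
  assume y: "y \<in> {0..1}"
  from False have "1 - y \<noteq> 0" by simp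
  then show ?thesis using jw_om[OF y] by simp
qed

lemma div_pw2: "y \<in> {0..1} \<Longrightarrow> poly p y * jw al be A B s y / (1 - y) = poly p y * om al be A B s y"
  using div_pw[of y p al be A B s] by simp

lemma wint_div: "wint al be A B s (\<lambda>y. poly p y / (1 - y)) = VI al be A B s p"
  unfolding wint_def VI_def
  by (intro set_lebesgue_integral_cong) (auto simp: div_pw2)

lemma wint_div_sq: "wint al be A B s (\<lambda>y. (poly p y)\<^sup>2 / (1 - y)) = VI al be A B s (p * p)"
  using wint_div[of al be A B s "p * p"] by (simp add: power2_eq_square)

lemma wint_div_pr: "wint al be A B s (\<lambda>y. poly p y * poly q y / (1 - y)) = VI al be A B s (p * q)"
  using wint_div[of al be A B s "p * q"] by simp

theorem theorem3p3:
  fixes al be A B t a b :: real and n :: nat and P :: "real \<Rightarrow> nat \<Rightarrow> real poly"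
  assumes al: "al > 0" and be: "be > 0"
    and A: "A \<ge> 0" and AB: "A + B \<ge> 0" and nz: "\<not> (A = 0 \<and> B = 0)"
    and OPS: "\<And>s. s \<in> {0<..<1} \<Longrightarrow> monic_OPS al be A B s (P s)"
    and t: "t \<in> {0<..<1}" and n: "n \<ge> 1"
    and rec: "[:0, 1:] * P t n = P t (Suc n) + smult a (P t n) + smult b (P t (n - 1))"
  shows "(2*n + 2 + al + be) * a
           = 2 * t * r_n al be A B t P n - 2 * y_n al be A B t P n - be
             + (2*n + 1 + al + be) * t + (1 - t) * x_n al be A B t P n
       \<and> (2*n + 2 + al + be) * a
           = 2 * p1 P n t - be + (2*n + 1 + al + be) * t + (1 - t) * x_n al be A B t P n
       \<and> (2*n - 1 + al + be) * (2*n + 1 + al + be) * b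
           = (y_n al be A B t P n - t * r_n al be A B t P n)\<^sup>2
             + (2*n + al) * t * r_n al be A B t P n
             + (be - (2*n + al + be) * t) * y_n al be A B t P n + n * (n + al) * t
       \<and> (2*n - 1 + al + be) * (2*n + 1 + al + be) * b
           = (p1 P n t)\<^sup>2 + (2*n + al) * p1 P n t
             + (2*n + al + be) * (1 - t) * y_n al be A B t P n + n * (n + al) * t
       \<and> (\<lambda>s. p1 P n s) differentiable (at t)
       \<and> (2*n - 1 + al + be) * (2*n + 1 + al + be) * b
           = (p1 P n t)\<^sup>2 + (- be + (2*n + al + be) * t) * p1 P n t
             + (2*n + al + be) * t * (1 - t) * deriv (\<lambda>s. p1 P n s) t + n * (n + al) * t"
proof -
  interpret jac al be A B P using al be A AB nz OPS by unfold_locales auto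
  have hn: "\<And>k. h_n al be A B t P k = hh t k" unfolding h_n_def hh_def by (rule wint_sq)
  have rn: "r_n al be A B t P n = rr t n" unfolding r_n_def rr_def bw_def hn by (simp add: mult.assoc)
  have xn: "x_n al be A B t P n = xx t n" unfolding x_n_def xx_def hn wint_div_sq by simp
  have yn: "y_n al be A B t P n = yy t n" unfolding y_n_def yy_def hn wint_div_pr by simp
  have pn: "p1 P n t = c1 t n" unfolding p1_def c1_def using n by simp
  have eq: "P t (Suc n) + smult a (P t n) + smult b (P t (n - 1))
      = P t (Suc n) + smult (alc t n) (P t n) + smult (bec t n) (P t (n - 1))"
    using rec recP[OF t, of n] by simp
  have cQ: "coeff (P t (n - 1)) n = 0" using coeffP_high[OF t, of "n - 1" n] n by simp
  have aa: "a = alc t n"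
    using arg_cong[OF eq, of "\<lambda>p. coeff p n"] cQ leadP[OF t, of n] by simp
  have bb: "b = bec t n"
    using arg_cong[OF eq, of "\<lambda>p. coeff p (n - 1)"] aa leadP[OF t, of "n - 1"] by simp
  have L3t: "(2 * real n + 2 + al + be) * alc t n = 2 * c1 t n - be + (2 * real n + 1 + al + be) * t + (1-t) * xx t n"
    by (rule L3[OF t])
  have L2t: "c1 t n = t * rr t n - yy t n" by (rule L2[OF t n])
  have I4: "(2 * real n - 1 + al + be) * (2 * real n + 1 + al + be) * bec t n
       = (c1 t n)^2 + (2 * real n + al) * c1 t n + (2 * real n + al + be) * (1-t) * yy t n + real n * (real n + al) * t"
    by (rule Id4[OF t n])
  have d1: "real (2 * n - 1) = 2 * real n - 1" using n by (simp add: of_nat_diff)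
  have fe: "(\<lambda>s. p1 P n s) = (\<lambda>s. coeff (P s n) (n - 1))" unfolding p1_def ..
  have D: "((\<lambda>s. p1 P n s) has_real_derivative rr t n) (at t)"
    unfolding fe by (rule p1_deriv[OF t n])
  have dv: "deriv (\<lambda>s. p1 P n s) t = rr t n" using D by (rule DERIV_imp_deriv)
  have diff: "(\<lambda>s. p1 P n s) differentiable (at t)"
    using D by (auto intro: differentiableI has_field_derivative_imp_has_derivative)
  show ?thesis
    unfolding rn xn yn pn aa bb dv
  proof (intro conjI)
    show "(2*n + 2 + al + be) * alc t n
           = 2 * t * rr t n - 2 * yy t n - be + (2*n + 1 + al + be) * t + (1 - t) * xx t n"
      using L3t L2t by (simp only: of_nat_add of_nat_mult of_nat_numeral of_nat_1) (simp add: algebra_simps)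
    show "(2*n + 2 + al + be) * alc t n
           = 2 * c1 t n - be + (2*n + 1 + al + be) * t + (1 - t) * xx t n"
      using L3t by (simp only: of_nat_add of_nat_mult of_nat_numeral of_nat_1)
    show "(2*n - 1 + al + be) * (2*n + 1 + al + be) * bec t n
           = (yy t n - t * rr t n)\<^sup>2 + (2*n + al) * t * rr t n
             + (be - (2*n + al + be) * t) * yy t n + n * (n + al) * t"
      using I4 L2t d1 by (simp only: of_nat_add of_nat_mult of_nat_numeral of_nat_1; simp add: algebra_simps power2_eq_square)
    show "(2*n - 1 + al + be) * (2*n + 1 + al + be) * bec t n
           = (c1 t n)\<^sup>2 + (2*n + al) * c1 t n
             + (2*n + al + be) * (1 - t) * yy t n + n * (n + al) * t"
      using I4 d1 by (simp only: of_nat_add of_nat_mult of_nat_numeral of_nat_1; simp add: algebra_simps power2_eq_square)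
    show "(\<lambda>s. p1 P n s) differentiable (at t)" by (rule diff)
    show "(2*n - 1 + al + be) * (2*n + 1 + al + be) * bec t n
           = (c1 t n)\<^sup>2 + (- be + (2*n + al + be) * t) * c1 t n
             + (2*n + al + be) * t * (1 - t) * rr t n + n * (n + al) * t"
      using I4 L2t d1 by (simp only: of_nat_add of_nat_mult of_nat_numeral of_nat_1; simp add: algebra_simps power2_eq_square)
  qed
qed


end
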